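(* Let $P=\{(u_1,v_1),\ldots,(u_n,v_n)\}\subseteq\{a,b\}^*\times\{a,b\}^*$ with $n\ge3$ have no solution as an instance of Restricted PCP, and let $W=W_0\cup\cdots\cup W_{15}$ be constructed from $P$ as in the context. Then for every cycle $Q$ of $W$, the componentwise product $Q$ in $F(\Gamma)\times F(\Gamma)$ is not equal to $(\varepsilon,\varepsilon)$.
   Context: For a set $H$, $F(H)$ denotes the free group on $H$; $\varepsilon$ is its identity (the empty word), and pairs of elements of free groups are multiplied componentwise. Restricted PCP: given $P=\{(u_1,v_1),\ldots,(u_n,v_n)\}\subseteq\{a,b\}^*\times\{a,b\}^*$ with $n\ge3$, a solution is a finite (possibly empty) sequence $l_1,\ldots,l_k$ with $2\le l_i\le n-1$ such that $u_1u_{l_1}\cdots u_{l_k}u_n=v_1v_{l_1}\cdots v_{l_k}v_n$. Construction of $W$. Let $\Gamma_i=\{a_i,b_i\}$ for $1\le i\le4$ and $\Gamma_B=\{x_1,\ldots,x_8\}$ be pairwise disjoint sets of letters, and $\Gamma=\Gamma_1\cup\Gamma_2\cup\Gamma_3\cup\Gamma_4\cup\Gamma_B$. Let $\delta_i:F(\{a,b\})\to F(\Gamma_i)$ be the homomorphism with $\delta_i(a)=a_i$, $\delta_i(b)=b_i$, and set $u_{ik}=\delta_i(u_k)$, $v_{ik}=\delta_i(v_k)$. For a positive integer $j$ let $\phi_i(j)=a_i^jb_i$ and $\psi_i(j)=(a_i^{-1})^jb_i^{-1}$. Put $x_0:=x_8$. For $p=1,2,3,4$ define $W_{4(p-1)}=\{(x_{2p-2}\,v_{p1}^{-1}u_{p1}\,x_{2p-1}^{-1},\;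 x_{2p-2}\,b_p\,x_{2p-1}^{-1})\}$, $W_{4(p-1)+1}=\{(x_{2p-1}\,u_{pj}\,x_{2p-1}^{-1},\; x_{2p-1}\,\phi_p(j)\,x_{2p-1}^{-1}) : 2\le j\le n-1\}$, $W_{4(p-1)+2}=\{(x_{2p-1}\,u_{pn}v_{pn}^{-1}\,x_{2p}^{-1},\; x_{2p-1}\,b_p^{-1}\,x_{2p}^{-1})\}$, $W_{4(p-1)+3}=\{(x_{2p}\,v_{pj}^{-1}\,x_{2p}^{-1},\; x_{2p}\,\psi_p(j)\,x_{2p}^{-1}) : 2\le j\le n-1\}$, and $W=W_0\cup W_1\cup\cdots\cup W_{15}$. A cycle of $W$ is a product $w_i\,w_{(i+1)\bmod 16}\cdots w_{(i+15)\bmod16}$ for some $0\le i\le15$, where $w_y\in W_y$ (a single pair) when $y$ is even and $w_y$ is a (possibly empty) finite product of pairs from $W_y$ when $y$ is odd. *)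

theory Defs
  imports Main
begin

text \<open>An element of the free group F(H) is represented by a reduced word over
H \<times> bool, where (h, True) is the letter h and (h, False) its inverse.\<close>

type_synonym 'a fword = "('a \<times> bool) list"

fun push :: "'a \<times> bool \<Rightarrow> 'a fword \<Rightarrow> 'a fword" where
  "push x [] = [x]"
| "push x (y # ys) = (if fst x = fst y \<and> snd x \<noteq> snd y then ys else x # y # ys)"

definition fnorm :: "'a fword \<Rightarrow> 'a fword" where
  "fnorm w = foldr push w []"

definition fmul :: "'a fword \<Rightarrow> 'a fword \<Rightarrow> 'a fword" where
  "fmul u w = fnorm (u @ w)"

definition finv :: "'a fword \<Rightarrow> 'a fword" where
  "finv w = rev (map (\<lambda>(h, s). (h, \<not> s)) w)"

definition fgen :: "'a \<Rightarrow> 'a fword" where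
  "fgen h = [(h, True)]"

definition fprod :: "'a fword list \<Rightarrow> 'a fword" where
  "fprod ws = foldr fmul ws []"

definition pmul :: "'a fword \<times> 'a fword \<Rightarrow> 'a fword \<times> 'a fword \<Rightarrow> 'a fword \<times> 'a fword" where
  "pmul p q = (fmul (fst p) (fst q), fmul (snd p) (snd q))"

definition pprod :: "('a fword \<times> 'a fword) list \<Rightarrow> 'a fword \<times> 'a fword" where
  "pprod ps = foldr pmul ps ([], [])"

datatype ab = a | b

text \<open>Letters of \<Gamma>: LA i = a_i, LB i = b_i (1 \<le> i \<le> 4), LX j = x_j (1 \<le> j \<le> 8).\<close>
datatype gam = LA nat | LB nat | LX nat

definition delta :: "nat \<Rightarrow> ab list \<Rightarrow> gam fword" where
  "delta i w = fprod (map (\<lambda>c. case c of a \<Rightarrow> fgen (LA i) | b \<Rightarrow> fgen (LB i)) w)"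

definition xg :: "nat \<Rightarrow> gam fword" where
  "xg j = fgen (LX (if j = 0 then 8 else j))"

definition phi :: "nat \<Rightarrow> nat \<Rightarrow> gam fword" where
  "phi i j = fprod (replicate j (fgen (LA i)) @ [fgen (LB i)])"

definition psi :: "nat \<Rightarrow> nat \<Rightarrow> gam fword" where
  "psi i j = fprod (replicate j (finv (fgen (LA i))) @ [finv (fgen (LB i))])"

definition rpcp_solution :: "nat \<Rightarrow> (nat \<Rightarrow> ab list) \<Rightarrow> (nat \<Rightarrow> ab list) \<Rightarrow> nat list \<Rightarrow> bool" where
  "rpcp_solution n u v ls \<longleftrightarrow>
     (\<forall>l \<in> set ls. 2 \<le> l \<and> l \<le> n - 1) \<and>
     u 1 @ concat (map u ls) @ u n = v 1 @ concat (map v ls) @ v n"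

text \<open>Wset n u v y is W_y for 0 \<le> y \<le> 15; write y = 4(p-1)+r with 1 \<le> p \<le> 4, 0 \<le> r \<le> 3.\<close>
definition Wset :: "nat \<Rightarrow> (nat \<Rightarrow> ab list) \<Rightarrow> (nat \<Rightarrow> ab list) \<Rightarrow> nat \<Rightarrow> (gam fword \<times> gam fword) set" where
  "Wset n u v y =
    (let p = y div 4 + 1; r = y mod 4;
         U = (\<lambda>k. delta p (u k)); V = (\<lambda>k. delta p (v k)) in
     if r = 0 then
       {(fprod [xg (2*p-2), finv (V 1), U 1, finv (xg (2*p-1))],
         fprod [xg (2*p-2), fgen (LB p), finv (xg (2*p-1))])}
     else if r = 1 then
       {(fprod [xg (2*p-1), U j, finv (xg (2*p-1))],
         fprod [xg (2*p-1), phi p j, finv (xg (2*p-1))]) | j. 2 \<le> j \<and> j \<le> n - 1}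
     else if r = 2 then
       {(fprod [xg (2*p-1), U n, finv (V n), finv (xg (2*p))],
         fprod [xg (2*p-1), finv (fgen (LB p)), finv (xg (2*p))])}
     else
       {(fprod [xg (2*p), finv (V j), finv (xg (2*p))],
         fprod [xg (2*p), psi p j, finv (xg (2*p))]) | j. 2 \<le> j \<and> j \<le> n - 1})"

text \<open>Q is a cycle of W: there are a start index i < 16 and, for each y < 16, a finite
list ws y of pairs from W_y (exactly one pair when y is even, any number when y is odd),
and Q is the product w_i w_{i+1 mod 16} ... w_{i+15 mod 16}, where w_y = product of ws y.\<close>
definition is_cycle :: "nat \<Rightarrow> (nat \<Rightarrow> ab list) \<Rightarrow> (nat \<Rightarrow> ab list) \<Rightarrow> gam fword \<times> gam fword \<Rightarrow> bool" where
  "is_cycle n u v Q \<longleftrightarrow>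
    (\<exists>i ws. i < 16 \<and>
       (\<forall>y < 16. set (ws y) \<subseteq> Wset n u v y \<and> (even y \<longrightarrow> length (ws y) = 1)) \<and>
       Q = pprod (map (\<lambda>k. pprod (ws ((i + k) mod 16))) [0..<16]))"

end

theory Submission
  imports Defs
begin


abbreviation N where "N \<equiv> fnorm"
definition iv :: "'a \<times> bool \<Rightarrow> 'a \<times> bool" where "iv x = (fst x, \<not> snd x)"

fun red :: "'a fword \<Rightarrow> bool" where
  "red [] = True" | "red [x] = True"
| "red (x # y # ys) = (\<not>(fst x = fst y \<and> snd x \<noteq> snd y) \<and> red (y # ys))"

lemma red_tl: "red (x # ys) \<Longrightarrow> red ys"
  by (cases ys) auto

lemma red_push: "red w \<Longrightarrow> red (push x w)"
proof (cases w)
  case (Cons y ys)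
  assume "red w" thus ?thesis using Cons by (cases ys) (auto dest: red_tl)
qed simp

lemma red_foldr: "red r \<Longrightarrow> red (foldr push w r)"
  by (induction w) (auto intro: red_push)

lemma red_N: "red (N w)"
  unfolding fnorm_def by (rule red_foldr) simp

lemma push_cancel: "red w \<Longrightarrow> push x (push (iv x) w) = w"
proof (cases w)
  case Nil thus ?thesis by (simp add: iv_def)
next
  case (Cons y ys)
  assume r: "red w"
  show ?thesis
  proof (cases "fst (iv x) = fst y \<and> snd (iv x) \<noteq> snd y")
    case True
    hence y: "y = x" by (cases x, cases y) (auto simp: iv_def)
    show ?thesis using r Cons True y by (cases ys) auto
  next
    case False thus ?thesis using Cons by (auto simp: iv_def)
  qed
qed

lemma push_cancel2: "red w \<Longrightarrow> push (iv x) (push x w) = w"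
  using push_cancel[of w "iv x"] by (simp add: iv_def)

lemma N_red: "red w \<Longrightarrow> N w = w"
proof (induction w)
  case (Cons x ys)
  hence "N ys = ys" using red_tl by blast
  thus ?case using Cons.prems by (cases ys) (auto simp: fnorm_def)
qed (simp add: fnorm_def)

lemma N_Cons: "N (x # w) = push x (N w)" by (simp add: fnorm_def)
lemma N_app: "N (xs @ ys) = foldr push xs (N ys)" by (simp add: fnorm_def)

lemma foldr_push_push: "red w \<Longrightarrow> red r \<Longrightarrow> foldr push (push x w) r = push x (foldr push w r)"
proof (cases w)
  case (Cons y ys)
  assume rw: "red w" and rr: "red r"
  show ?thesis
  proof (cases "fst x = fst y \<and> snd x \<noteq> snd y")
    case True
    hence y: "y = iv x" by (cases x, cases y) (auto simp: iv_def)
    have "red (foldr push ys r)" using rr red_foldr by blast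
    thus ?thesis using Cons True y push_cancel[of "foldr push ys r" x] by simp
  qed (use Cons in auto)
qed simp

lemma foldr_N: "red r \<Longrightarrow> foldr push (N xs) r = foldr push xs r"
proof (induction xs)
  case (Cons x xs)
  have "foldr push (N (x#xs)) r = foldr push (push x (N xs)) r" by (simp add: N_Cons)
  also have "\<dots> = push x (foldr push (N xs) r)" using foldr_push_push red_N Cons.prems by blast
  finally show ?case using Cons by simp
qed (simp add: fnorm_def)

lemma N_N: "N (N w) = N w" by (rule N_red[OF red_N])

lemma N_appL: "N (N xs @ ys) = N (xs @ ys)"
  by (simp add: N_app foldr_N red_N)
lemma N_appR: "N (xs @ N ys) = N (xs @ ys)"
  by (simp add: N_app N_N)

lemma N_cancel: "N (x # iv x # z) = N z"
  by (simp add: N_Cons push_cancel red_N)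
lemma N_cancel2: "N (iv x # x # z) = N z"
  by (simp add: N_Cons push_cancel2 red_N)

lemma finv_Nil[simp]: "finv [] = []" by (simp add: finv_def)
lemma finv_Cons: "finv (x # w) = finv w @ [iv x]"
  by (cases x) (simp add: finv_def iv_def)
lemma finv_app: "finv (xs @ ys) = finv ys @ finv xs" by (simp add: finv_def)
lemma finv_finv[simp]: "finv (finv w) = w" by (induction w) (auto simp: finv_def)

lemma N_inv_left: "N (finv w @ w @ z) = N z"
proof (induction w arbitrary: z)
  case (Cons x w)
  have "N (finv (x#w) @ (x#w) @ z) = N (finv w @ (iv x # x # (w @ z)))" by (simp add: finv_Cons)
  also have "\<dots> = N (finv w @ N (iv x # x # (w @ z)))" by (simp add: N_appR)
  also have "\<dots> = N (finv w @ N (w @ z))" by (simp add: N_cancel2)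
  also have "\<dots> = N z" using Cons by (simp add: N_appR)
  finally show ?case .
qed simp

lemma N_inv_right: "N (w @ finv w @ z) = N z"
  using N_inv_left[of "finv w" z] by simp

lemma N_cancelL: "N (A @ B) = [] \<Longrightarrow> N B = N (finv A)"
proof -
  assume h: "N (A @ B) = []"
  have "N B = N (finv A @ A @ B)" by (simp add: N_inv_left)
  also have "\<dots> = N (finv A @ N (A @ B))" by (simp add: N_appR)
  finally show ?thesis using h by simp
qed

lemma N_Nil[simp]: "N [] = []" by (simp add: fnorm_def)

lemma N_rot: "N (A @ B) = [] \<Longrightarrow> N (B @ A) = []"
proof -
  assume h: "N (A @ B) = []"
  have "N (B @ A) = N (finv A @ (A @ B) @ A)" using N_inv_left[of A "B @ A"] by simp
  also have "\<dots> = N (finv A @ N ((A @ B) @ A))" by (simp add: N_appR)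
  also have "N ((A @ B) @ A) = N (N (A @ B) @ A)" by (simp add: N_appL)
  also have "N (A @ B) = []" by (rule h)
  finally have "N (B @ A) = N (finv A @ N A)" by simp
  also have "\<dots> = []" using N_inv_left[of A "[]"] by (simp add: N_appR)
  finally show ?thesis .
qed

lemma N_concat: "N (concat (map N L)) = N (concat L)"
proof (induction L)
  case (Cons x L)
  have "N (concat (map N (x#L))) = N (N x @ N (concat (map N L)))" by (simp add: N_appR)
  also have "\<dots> = N (x @ concat L)" using Cons by (simp add: N_appL N_appR)
  finally show ?case by simp
qed simp

lemma fprod_N: "fprod ws = N (concat ws)"
proof (induction ws)
  case (Cons w ws)
  have "fprod (w # ws) = N (w @ fprod ws)" by (simp add: fprod_def fmul_def)
  thus ?case using Cons by (simp add: N_appR)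
qed (simp add: fprod_def)

lemma pprod_fst: "fst (pprod ps) = fprod (map fst ps)"
  by (induction ps) (auto simp: pprod_def fprod_def pmul_def)
lemma pprod_snd: "snd (pprod ps) = fprod (map snd ps)"
  by (induction ps) (auto simp: pprod_def fprod_def pmul_def)

definition resp :: "('a \<times> bool \<Rightarrow> bool) \<Rightarrow> bool" where
  "resp P \<longleftrightarrow> (\<forall>x. P (iv x) = P x)"

lemma N_filter_push: "resp P \<Longrightarrow> N (filter P (push x r)) = N (filter P (x # r))"
proof (cases r)
  case (Cons y ys)
  assume rp: "resp P"
  show ?thesis
  proof (cases "fst x = fst y \<and> snd x \<noteq> snd y")
    case True
    hence y: "y = iv x" by (cases x, cases y) (auto simp: iv_def)
    have "P y = P x" using rp y unfolding resp_def by metis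
    thus ?thesis using Cons True y N_cancel[of x "filter P ys"] by auto
  qed (use Cons in auto)
qed simp

lemma N_filter: "resp P \<Longrightarrow> N (filter P (N w)) = N (filter P w)"
proof (induction w)
  case (Cons x w)
  have "N (filter P (N (x#w))) = N (filter P (x # N w))"
    by (simp add: N_Cons N_filter_push Cons.prems)
  also have "\<dots> = N (filter P [x] @ N (filter P (N w)))" by (simp add: N_appR)
  also have "\<dots> = N (filter P [x] @ filter P w)" using Cons by (simp add: N_appR)
  finally show ?case by simp
qed (simp add: fnorm_def)

lemma red_sign: "\<forall>x\<in>set w. snd x = s \<Longrightarrow> red w"
proof (induction w)
  case (Cons x w) thus ?case by (cases w) auto
qed simp

lemma N_sign: "\<forall>x\<in>set w. snd x = s \<Longrightarrow> N w = w"
  using N_red red_sign by blast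



definition D :: "nat \<Rightarrow> ab list \<Rightarrow> gam fword" where
  "D p w = map (\<lambda>c. (case c of a \<Rightarrow> LA p | b \<Rightarrow> LB p, True)) w"

lemma D_app: "D p (x @ y) = D p x @ D p y" by (simp add: D_def)
lemma D_concat: "concat (map (\<lambda>j. D p (f j)) J) = D p (concat (map f J))"
  by (induction J) (auto simp: D_def)

lemma delta_D: "delta p w = D p w"
proof -
  have "delta p w = N (concat (map (\<lambda>c. case c of a \<Rightarrow> fgen (LA p) | b \<Rightarrow> fgen (LB p)) w))"
    by (simp add: delta_def fprod_N)
  also have "concat (map (\<lambda>c. case c of a \<Rightarrow> fgen (LA p) | b \<Rightarrow> fgen (LB p)) w) = D p w"
    by (induction w) (auto simp: D_def fgen_def split: ab.split)
  also have "N (D p w) = D p w" by (rule N_sign[where s=True]) (auto simp: D_def)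
  finally show ?thesis .
qed

lemma phi_eq: "phi i j = replicate j (LA i, True) @ [(LB i, True)]"
proof -
  have "phi i j = N (concat (replicate j (fgen (LA i))) @ fgen (LB i))"
    by (simp add: phi_def fprod_N)
  also have "concat (replicate j (fgen (LA i))) = replicate j (LA i, True)"
    by (induction j) (auto simp: fgen_def)
  also have "N (replicate j (LA i, True) @ fgen (LB i)) = replicate j (LA i, True) @ fgen (LB i)"
    by (rule N_sign[where s=True]) (auto simp: fgen_def)
  finally show ?thesis by (simp add: fgen_def)
qed

lemma finv_fgen: "finv (fgen h) = [(h, False)]" by (simp add: finv_def fgen_def)

lemma psi_eq: "psi i j = replicate j (LA i, False) @ [(LB i, False)]"
proof -
  have "psi i j = N (concat (replicate j (finv (fgen (LA i)))) @ finv (fgen (LB i)))"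
    by (simp add: psi_def fprod_N)
  also have "concat (replicate j (finv (fgen (LA i)))) = replicate j (LA i, False)"
    by (induction j) (auto simp: finv_fgen)
  also have "N (replicate j (LA i, False) @ finv (fgen (LB i))) = replicate j (LA i, False) @ finv (fgen (LB i))"
    by (rule N_sign[where s=False]) (auto simp: finv_fgen)
  finally show ?thesis by (simp add: finv_fgen)
qed

definition P1 :: "gam \<times> bool \<Rightarrow> bool" where "P1 z \<longleftrightarrow> (fst z = LA 1 \<or> fst z = LB 1)"

lemma resp_P1: "resp P1" by (simp add: resp_def P1_def iv_def)

lemma filter_xg[simp]: "filter P1 (xg k) = []" by (simp add: xg_def fgen_def P1_def)
lemma filter_D1[simp]: "filter P1 (D 1 w) = D 1 w"
  by (auto simp: D_def P1_def split: ab.split)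
lemma filter_Dp[simp]: "p \<noteq> 1 \<Longrightarrow> filter P1 (D p w) = []"
  by (auto simp: D_def P1_def filter_empty_conv split: ab.split)
lemma filter_finv[simp]: "filter P1 (finv w) = finv (filter P1 w)"
  by (induction w) (auto simp: finv_def P1_def case_prod_unfold)
lemma filter_phi[simp]: "filter P1 (phi p j) = (if p = 1 then phi p j else [])"
  by (induction j) (auto simp: phi_eq P1_def)
lemma filter_psi[simp]: "filter P1 (psi p j) = (if p = 1 then psi p j else [])"
  by (induction j) (auto simp: psi_eq P1_def)
lemma filter_fgen[simp]: "filter P1 (fgen h) = (if h = LA 1 \<or> h = LB 1 then fgen h else [])"
  by (simp add: fgen_def P1_def)

lemma set_push: "set (push x w) \<subseteq> insert x (set w)"
  by (cases "(x,w)" rule: push.cases) auto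
lemma set_N: "set (N w) \<subseteq> set w"
proof (induction w)
  case (Cons x w)
  thus ?case using set_push[of x "N w"] by (auto simp: N_Cons)
qed simp
lemma filter_N_nil: "filter P w = [] \<Longrightarrow> filter P (N w) = []"
  using set_N by (fastforce simp: filter_empty_conv)

lemma Nfilter_fprod: "N (filter P1 (fprod ws)) = N (filter P1 (concat ws))"
  by (simp add: fprod_N N_filter resp_P1)

lemma far_block:
  assumes "4 \<le> y" "y < 16" "w \<in> Wset n u v y"
  shows "filter P1 (fst w) = [] \<and> filter P1 (snd w) = []"
proof -
  define p where "p = y div 4 + 1"
  have p: "p \<noteq> 1" using assms(1) unfolding p_def by auto
  show ?thesis using assms(3) p
    unfolding Wset_def Let_def p_def[symmetric]
    by (auto simp: fprod_N delta_D intro!: filter_N_nil split: if_splits)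
qed



lemma map_rot: "i < m \<Longrightarrow> map (\<lambda>k. g ((i + k) mod m)) [0..<m] = rotate i (map g [0..<m])"
  by (rule nth_equalityI) (auto simp: nth_rotate)

lemma N_concat_rot: "N (concat (rotate i L)) = [] \<Longrightarrow> N (concat L) = []"
proof -
  assume h: "N (concat (rotate i L)) = []"
  let ?k = "i mod length L"
  have "rotate i L = drop ?k L @ take ?k L" by (rule rotate_drop_take)
  hence "N (concat (drop ?k L) @ concat (take ?k L)) = []" using h by simp
  hence "N (concat (take ?k L) @ concat (drop ?k L)) = []" by (rule N_rot)
  thus ?thesis by (metis append_take_drop_id concat_append)
qed

lemma cyc_proj:
  assumes "\<And>ps. \<pi> (pprod ps) = fprod (map \<pi> ps)"
  shows "\<pi> (pprod (map (\<lambda>k. pprod (ws ((i+k) mod 16))) [0..<16]))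
     = N (concat (map (\<lambda>k. concat (map \<pi> (ws ((i+k) mod 16)))) [0..<16]))"
proof -
  have "\<pi> (pprod (map (\<lambda>k. pprod (ws ((i+k) mod 16))) [0..<16]))
      = N (concat (map N (map (\<lambda>k. concat (map \<pi> (ws ((i+k) mod 16)))) [0..<16])))"
    by (simp add: assms fprod_N comp_def)
  thus ?thesis by (simp only: N_concat)
qed

lemma red16:
  assumes "i < 16" "N (concat (map (\<lambda>k. g ((i+k) mod 16)) [0..<16])) = []"
    and far: "\<And>y. 4 \<le> y \<Longrightarrow> y < 16 \<Longrightarrow> filter P1 (g y) = []"
  shows "N (N (filter P1 (g 0)) @ N (filter P1 (g 1)) @ N (filter P1 (g 2)) @ N (filter P1 (g 3))) = []"
proof -
  have "N (concat (map g [0..<16])) = []"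
    using assms(2) map_rot[OF assms(1), of g] N_concat_rot by metis
  hence "N (filter P1 (concat (map g [0..<16]))) = []"
    using N_filter[OF resp_P1, of "concat (map g [0..<16])"] by simp
  hence "N (concat (map (\<lambda>y. filter P1 (g y)) [0..<16])) = []"
    by (simp add: filter_concat comp_def)
  moreover have "[0..<16::nat] = [0,1,2,3] @ [4..<16]"
  proof -
    have "[0..<16::nat] = [0..<4] @ [4..<16]" using upt_add_eq_append[of 0 4 12] by simp
    thus ?thesis by (simp add: upt_conv_Cons)
  qed
  moreover have "concat (map (\<lambda>y. filter P1 (g y)) [4..<16]) = []" using far by auto
  ultimately have "N (concat (map (\<lambda>y. filter P1 (g y)) [0,1,2,3])) = []" by simp
  hence "N (concat (map N (map (\<lambda>y. filter P1 (g y)) [0,1,2,3]))) = []" by (simp only: N_concat)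
  thus ?thesis by simp
qed

lemma extract_list: "set xs \<subseteq> {f j | j. C j} \<Longrightarrow> \<exists>J. xs = map f J \<and> (\<forall>j\<in>set J. C j)"
proof (induction xs)
  case (Cons x xs)
  then obtain J where "xs = map f J" "\<forall>j\<in>set J. C j" by auto
  moreover obtain j where "x = f j" "C j" using Cons.prems by auto
  ultimately show ?case by (intro exI[of _ "j # J"]) auto
qed simp

lemma single: "set xs \<subseteq> {w} \<Longrightarrow> length xs = 1 \<Longrightarrow> xs = [w]"
  by (cases xs) auto

lemma W0: "Wset n u v 0 = {(fprod [xg 0, finv (delta 1 (v 1)), delta 1 (u 1), finv (xg 1)],
   fprod [xg 0, fgen (LB 1), finv (xg 1)])}" by (simp add: Wset_def Let_def)
lemma W1: "Wset n u v 1 = {(fprod [xg 1, delta 1 (u j), finv (xg 1)], fprod [xg 1, phi 1 j, finv (xg 1)]) | j. 2 \<le> j \<and> j \<le> n - 1}"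
  by (simp add: Wset_def Let_def)
lemma W2: "Wset n u v 2 = {(fprod [xg 1, delta 1 (u n), finv (delta 1 (v n)), finv (xg 2)],
   fprod [xg 1, finv (fgen (LB 1)), finv (xg 2)])}" by (simp add: Wset_def Let_def)
lemma W3: "Wset n u v 3 = {(fprod [xg 2, finv (delta 1 (v j)), finv (xg 2)], fprod [xg 2, psi 1 j, finv (xg 2)]) | j. 2 \<le> j \<and> j \<le> n - 1}"
  by (simp add: Wset_def Let_def)

lemma Nfilt_blk: "N (filter P1 (concat (map \<pi> xs))) = N (concat (map (\<lambda>w. N (filter P1 (\<pi> w))) xs))"
proof -
  have "N (filter P1 (concat (map \<pi> xs))) = N (concat (map N (map (\<lambda>w. filter P1 (\<pi> w)) xs)))"
    by (simp only: N_concat) (simp add: filter_concat comp_def)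
  thus ?thesis by (simp add: comp_def)
qed

lemma pos_eq:
  assumes "N (finv A @ B @ finv C) = []" "\<forall>x\<in>set B. snd x" "\<forall>x\<in>set (A @ C). snd x"
  shows "B = A @ C"
proof -
  have "N ((B @ finv C) @ finv A) = []" using N_rot[of "finv A" "B @ finv C"] assms(1) by simp
  hence "N (B @ finv (A @ C)) = []" by (simp add: finv_app)
  hence "N (finv (A @ C) @ B) = []" by (rule N_rot)
  hence "N B = N (A @ C)" using N_cancelL by fastforce
  moreover have "N B = B" using assms(2) N_sign[of B True] by simp
  moreover have "N (A @ C) = A @ C" using assms(3) N_sign[of "A @ C" True] by simp
  ultimately show ?thesis by simp
qed

lemma rep_inj: "x \<noteq> y \<Longrightarrow> replicate j x @ y # r = replicate k x @ y # r' \<Longrightarrow> j = k \<and> r = r'"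
proof (induction j arbitrary: k)
  case 0 thus ?case by (cases k) auto
next
  case (Suc j) thus ?case by (cases k) auto
qed

lemma Phi_inj: "x \<noteq> y \<Longrightarrow> concat (map (\<lambda>j. replicate j x @ [y]) J) = concat (map (\<lambda>j. replicate j x @ [y]) K) \<Longrightarrow> J = K"
proof (induction J arbitrary: K)
  case Nil thus ?case by (cases K) auto
next
  case (Cons j J)
  show ?case
  proof (cases K)
    case Nil thus ?thesis using Cons.prems by auto
  next
    case (Cons k K')
    have "replicate j x @ y # concat (map (\<lambda>j. replicate j x @ [y]) J) = replicate k x @ y # concat (map (\<lambda>j. replicate j x @ [y]) K')"
      using Cons.prems(2) \<open>K = k # K'\<close> by simp
    from rep_inj[OF Cons.prems(1) this] have "j = k" "concat (map (\<lambda>j. replicate j x @ [y]) J) = concat (map (\<lambda>j. replicate j x @ [y]) K')"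
      by auto
    thus ?thesis using Cons.IH[OF Cons.prems(1)] \<open>K = k # K'\<close> by auto
  qed
qed

lemma E_shift: "concat (map (\<lambda>j. y # replicate j x) K) @ [y] = y # concat (map (\<lambda>j. replicate j x @ [y]) K)"
  by (induction K) auto

lemma finv_concat: "concat (map (\<lambda>j. finv (f j)) J) = finv (concat (map f (rev J)))"
  by (induction J) (auto simp: finv_app)

lemma finv_rep: "finv (y # replicate j x) = replicate j (iv x) @ [iv y]"
  by (simp add: finv_def iv_def case_prod_unfold)

lemma D1_inj: "D 1 x = D 1 y \<Longrightarrow> x = y"
proof -
  assume h: "D 1 x = D 1 y"
  have "inj (\<lambda>c::ab. (case c of a \<Rightarrow> LA 1 | b \<Rightarrow> LB 1, True))"
    by (rule injI) (auto split: ab.splits)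
  thus ?thesis using h unfolding D_def by (simp add: inj_map_eq_map)
qed



lemma N4: "N (N w1 @ N w2 @ N w3 @ N w4) = N (w1 @ w2 @ w3 @ w4)"
  using N_concat[of "[w1,w2,w3,w4]"] by simp

lemma N_cancel_end: "N (A @ [iv x, x]) = N A"
proof -
  have "N (A @ [iv x, x]) = N (A @ N [iv x, x])" by (simp add: N_appR)
  also have "N [iv x, x] = []" using N_cancel2[of x "[]"] by simp
  finally show ?thesis by simp
qed

lemma N_concatN: "N (concat (map (\<lambda>j. N (f j)) J)) = N (concat (map f J))"
  using N_concat[of "map f J"] by (simp add: comp_def)

lemma filter_DSuc[simp]: "filter P1 (D (Suc 0) w) = D (Suc 0) w"
  using filter_D1 by simp

lemma D_pos: "\<forall>x\<in>set (D p w). snd x" by (auto simp: D_def)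

theorem mainTheorem2:
  fixes n :: nat and u v :: "nat \<Rightarrow> ab list" and Q :: "gam fword \<times> gam fword"
  assumes "n \<ge> 3"
    and "\<not> (\<exists>ls. rpcp_solution n u v ls)"
    and "is_cycle n u v Q"
  shows "Q \<noteq> ([], [])"
proof
  assume Q0: "Q = ([], [])"
  obtain i ws where i: "i < 16"
    and hws: "\<forall>y < 16. set (ws y) \<subseteq> Wset n u v y \<and> (even y \<longrightarrow> length (ws y) = 1)"
    and Qd: "Q = pprod (map (\<lambda>k. pprod (ws ((i + k) mod 16))) [0..<16])"
    using assms(3) unfolding is_cycle_def by blast
  define g1 where "g1 y = concat (map fst (ws y))" for y
  define g2 where "g2 y = concat (map snd (ws y))" for y
  have far1: "filter P1 (g1 y) = []" if "4 \<le> y" "y < 16" for y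
    using hws that far_block[OF that] unfolding g1_def by (fastforce simp: filter_concat)
  have far2: "filter P1 (g2 y) = []" if "4 \<le> y" "y < 16" for y
    using hws that far_block[OF that] unfolding g2_def by (fastforce simp: filter_concat)
  have "fst Q = N (concat (map (\<lambda>k. g1 ((i+k) mod 16)) [0..<16]))"
    unfolding Qd g1_def by (rule cyc_proj) (rule pprod_fst)
  hence F1: "N (N (filter P1 (g1 0)) @ N (filter P1 (g1 1)) @ N (filter P1 (g1 2)) @ N (filter P1 (g1 3))) = []"
    using red16[where g=g1, OF i _ far1] Q0 by simp
  have "snd Q = N (concat (map (\<lambda>k. g2 ((i+k) mod 16)) [0..<16]))"
    unfolding Qd g2_def by (rule cyc_proj) (rule pprod_snd)
  hence F2: "N (N (filter P1 (g2 0)) @ N (filter P1 (g2 1)) @ N (filter P1 (g2 2)) @ N (filter P1 (g2 3))) = []"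
    using red16[where g=g2, OF i _ far2] Q0 by simp
  have ws0: "ws 0 = [(fprod [xg 0, finv (delta 1 (v 1)), delta 1 (u 1), finv (xg 1)],
   fprod [xg 0, fgen (LB 1), finv (xg 1)])]"
    using hws[rule_format, of 0] by (intro single) (auto simp: W0)
  have ws2: "ws 2 = [(fprod [xg 1, delta 1 (u n), finv (delta 1 (v n)), finv (xg 2)],
   fprod [xg 1, finv (fgen (LB 1)), finv (xg 2)])]"
    using hws[rule_format, of 2] by (intro single) (auto simp: W2)
  obtain J where ws1: "ws 1 = map (\<lambda>j. (fprod [xg 1, delta 1 (u j), finv (xg 1)], fprod [xg 1, phi 1 j, finv (xg 1)])) J"
    and J: "\<forall>j\<in>set J. 2 \<le> j \<and> j \<le> n - 1"
    using extract_list[of "ws 1" "\<lambda>j. (fprod [xg 1, delta 1 (u j), finv (xg 1)], fprod [xg 1, phi 1 j, finv (xg 1)])" "\<lambda>j. 2 \<le> j \<and> j \<le> n - 1"]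
      hws[rule_format, of 1] unfolding W1 by auto
  obtain J' where ws3: "ws 3 = map (\<lambda>j. (fprod [xg 2, finv (delta 1 (v j)), finv (xg 2)], fprod [xg 2, psi 1 j, finv (xg 2)])) J'"
    using extract_list[of "ws 3" "\<lambda>j. (fprod [xg 2, finv (delta 1 (v j)), finv (xg 2)], fprod [xg 2, psi 1 j, finv (xg 2)])" "\<lambda>j. 2 \<le> j \<and> j \<le> n - 1"]
      hws[rule_format, of 3] unfolding W3 by auto
  define bp where "bp = (LB 1, True)"
  define ap where "ap = (LA 1, True)"
  define Phi where "Phi K = concat (map (\<lambda>j. replicate j ap @ [bp]) K)" for K
  define Y where "Y = concat (map (\<lambda>j. bp # replicate j ap) (rev J'))"
  have a20: "N (filter P1 (g2 0)) = N [bp]"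
    by (simp add: g2_def ws0 Nfilter_fprod bp_def fgen_def P1_def)
  have a21: "N (filter P1 (g2 1)) = N (Phi J)"
  proof -
    have "N (filter P1 (g2 1)) = N (concat (map (\<lambda>j. phi 1 j) J))"
      unfolding g2_def Nfilt_blk ws1 by (simp add: comp_def Nfilter_fprod N_concatN)
    also have "concat (map (\<lambda>j. phi 1 j) J) = Phi J" by (simp add: Phi_def phi_eq ap_def bp_def)
    finally show ?thesis .
  qed
  have a22: "N (filter P1 (g2 2)) = N [iv bp]"
    by (simp add: g2_def ws2 Nfilter_fprod bp_def finv_fgen iv_def P1_def)
  have a23: "N (filter P1 (g2 3)) = N (finv Y)"
  proof -
    have "N (filter P1 (g2 3)) = N (concat (map (\<lambda>j. psi 1 j) J'))"
      unfolding g2_def Nfilt_blk ws3 by (simp add: comp_def Nfilter_fprod N_concatN)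
    also have "concat (map (\<lambda>j. psi 1 j) J') = concat (map (\<lambda>j. finv (bp # replicate j ap)) J')"
      by (simp add: psi_eq finv_rep iv_def ap_def bp_def)
    also have "\<dots> = finv Y" unfolding Y_def by (rule finv_concat)
    finally show ?thesis .
  qed
  let ?X = "[bp] @ Phi J @ [iv bp]"
  have "N (?X @ finv Y) = []" using F2 N4[of "[bp]" "Phi J" "[iv bp]" "finv Y"] a20 a21 a22 a23 by simp
  hence "N (finv Y @ ?X) = []" by (rule N_rot)
  hence "N ?X = N (finv (finv Y))" by (rule N_cancelL)
  moreover have "N Y = Y" by (rule N_sign[where s=True]) (auto simp: Y_def bp_def ap_def)
  ultimately have XY: "N ?X = Y" by simp
  have "N (?X @ [bp]) = N (N ?X @ [bp])" by (simp add: N_appL)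
  also have "\<dots> = N (Y @ [bp])" using XY by simp
  also have "Y @ [bp] = bp # Phi (rev J')" unfolding Y_def Phi_def by (rule E_shift)
  also have "N (bp # Phi (rev J')) = bp # Phi (rev J')"
    by (rule N_sign[where s=True]) (auto simp: Phi_def bp_def ap_def)
  finally have e1: "N (?X @ [bp]) = bp # Phi (rev J')" .
  have "N (?X @ [bp]) = N ([bp] @ Phi J)" using N_cancel_end[of "[bp] @ Phi J" bp] by simp
  also have "\<dots> = [bp] @ Phi J"
    by (rule N_sign[where s=True]) (auto simp: Phi_def bp_def ap_def)
  finally have "Phi (rev J') = Phi J" using e1 by simp
  hence JJ: "rev J' = J" unfolding Phi_def by (rule Phi_inj[rotated]) (simp add: ap_def bp_def)
  have a10: "N (filter P1 (g1 0)) = N (finv (D 1 (v 1)) @ D 1 (u 1))"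
    by (simp add: g1_def ws0 Nfilter_fprod delta_D)
  have a11: "N (filter P1 (g1 1)) = N (D 1 (concat (map u J)))"
    unfolding g1_def Nfilt_blk ws1
    by (simp add: comp_def Nfilter_fprod N_concatN delta_D D_concat)
  have a12: "N (filter P1 (g1 2)) = N (D 1 (u n) @ finv (D 1 (v n)))"
    by (simp add: g1_def ws2 Nfilter_fprod delta_D)
  have a13: "N (filter P1 (g1 3)) = N (finv (D 1 (concat (map v J))))"
  proof -
    have "N (filter P1 (g1 3)) = N (concat (map (\<lambda>j. finv (D 1 (v j))) J'))"
      unfolding g1_def Nfilt_blk ws3 by (simp add: comp_def Nfilter_fprod N_concatN delta_D)
    also have "concat (map (\<lambda>j. finv (D 1 (v j))) J') = finv (concat (map (\<lambda>j. D 1 (v j)) (rev J')))"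
      by (rule finv_concat)
    finally show ?thesis using JJ by (simp add: D_concat)
  qed
  have "N ((finv (D 1 (v 1)) @ D 1 (u 1)) @ D 1 (concat (map u J)) @ (D 1 (u n) @ finv (D 1 (v n))) @ finv (D 1 (concat (map v J)))) = []"
    using F1 N4[of "finv (D 1 (v 1)) @ D 1 (u 1)" "D 1 (concat (map u J))" "D 1 (u n) @ finv (D 1 (v n))" "finv (D 1 (concat (map v J)))"]
      a10 a11 a12 a13 by simp
  hence "N (finv (D 1 (v 1)) @ (D 1 (u 1) @ D 1 (concat (map u J)) @ D 1 (u n)) @ finv (D 1 (concat (map v J)) @ D 1 (v n))) = []"
    by (simp add: finv_app)
  hence "D 1 (u 1) @ D 1 (concat (map u J)) @ D 1 (u n) = D 1 (v 1) @ (D 1 (concat (map v J)) @ D 1 (v n))"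
    by (rule pos_eq) (auto simp: D_def)
  hence "D 1 (u 1 @ concat (map u J) @ u n) = D 1 (v 1 @ concat (map v J) @ v n)"
    by (simp add: D_app)
  hence "u 1 @ concat (map u J) @ u n = v 1 @ concat (map v J) @ v n" by (rule D1_inj)
  hence "rpcp_solution n u v J" using J unfolding rpcp_solution_def by blast
  thus False using assms(2) by blast
qed


end
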